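(* Suppose $\{\mathcal{G}_k\}$ is uniformly jointly strongly connected with constant $B\ge1$. Then an algorithm in $\mathcal{A}_{\rm ave}$ achieves global asymptotic consensus if either $$\sum_{s=0}^\infty\ \prod_{k=s(n-1)B}^{(s+1)(n-1)B-1}\alpha_k=\infty$$ or $$\sum_{s=0}^\infty\ \prod_{k=s(n-1)B}^{(s+1)(n-1)B-1}(1-\alpha_k-\eta_k)=\infty.$$
   Context: Network of nodes $\mathcal{V}=\{1,\dots,n\}$, $n\ge 3$, discrete time, states $x_i(k)\in\mathbb{R}$. At each time $k$ a digraph $\mathcal{G}_k=(\mathcal{V},\mathcal{E}_k)$ is given; $j$ is a neighbor of $i$ at time $k$ if $(j,i)\in\mathcal{E}_k$, every node is always its own neighbor; $\mathcal{N}_i(k)$ is the neighbor set. The algorithm is $$x_i(k+1)=\eta_k x_i(k)+\alpha_k\min_{j\in\mathcal{N}_i(k)}x_j(k)+(1-\eta_k-\alpha_k)\max_{j\in\mathcal{N}_i(k)}x_j(k),$$ with node-independent parameters; $\mathcal{A}_{\rm ave}$ consists of those with $\eta_k\in(0,1]$, $\alpha_k\in[0,1-\eta_k]$ for all $k$. Global asymptotic consensus: for every initial time $k_0\ge0$ and initial value $x(k_0)=x^0\in\mathbb{R}^n$ there is $z_*$ with $x_i(k)\to z_*$ for all $i$. A digraph is strongly connected if every node is reachable from every other node by a directed path. $\mathcal{G}([k_1,k_2])=(\mathcal{V},\cup_{k\in[k_1,k_2]}\mathcal{E}_k)$. $\{\mathcal{G}_k\}$ is uniformly jointly strongly connected if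 there is an integer $B\ge1$ with $\mathcal{G}([k,k+B-1])$ strongly connected for all $k\ge0$. *)

theory Defs
  imports "HOL-Analysis.Analysis"
begin

text \<open>Nodes are 0,...,n-1. At time k the digraph has edge set E k; an edge (j,i)
  means j is a neighbor of i. Every node is its own neighbor.\<close>

definition nbrs :: "nat \<Rightarrow> (nat \<Rightarrow> (nat \<times> nat) set) \<Rightarrow> nat \<Rightarrow> nat \<Rightarrow> nat set" where
  "nbrs n E k i = insert i {j. j < n \<and> (j, i) \<in> E k}"

definition step ::
  "nat \<Rightarrow> (nat \<Rightarrow> (nat \<times> nat) set) \<Rightarrow> (nat \<Rightarrow> real) \<Rightarrow> (nat \<Rightarrow> real)
   \<Rightarrow> nat \<Rightarrow> (nat \<Rightarrow> real) \<Rightarrow> (nat \<Rightarrow> real)" where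
  "step n E \<eta> \<alpha> k x = (\<lambda>i. \<eta> k * x i
       + \<alpha> k * Min (x ` nbrs n E k i)
       + (1 - \<eta> k - \<alpha> k) * Max (x ` nbrs n E k i))"

fun traj ::
  "nat \<Rightarrow> (nat \<Rightarrow> (nat \<times> nat) set) \<Rightarrow> (nat \<Rightarrow> real) \<Rightarrow> (nat \<Rightarrow> real)
   \<Rightarrow> nat \<Rightarrow> (nat \<Rightarrow> real) \<Rightarrow> nat \<Rightarrow> (nat \<Rightarrow> real)" where
  "traj n E \<eta> \<alpha> k0 x0 0 = x0"
| "traj n E \<eta> \<alpha> k0 x0 (Suc m) = step n E \<eta> \<alpha> (k0 + m) (traj n E \<eta> \<alpha> k0 x0 m)"

definition in_A_ave :: "(nat \<Rightarrow> real) \<Rightarrow> (nat \<Rightarrow> real) \<Rightarrow> bool" where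
  "in_A_ave \<eta> \<alpha> \<longleftrightarrow> (\<forall>k. 0 < \<eta> k \<and> \<eta> k \<le> 1 \<and> 0 \<le> \<alpha> k \<and> \<alpha> k \<le> 1 - \<eta> k)"

definition strongly_connected :: "nat \<Rightarrow> (nat \<times> nat) set \<Rightarrow> bool" where
  "strongly_connected n Ed \<longleftrightarrow> (\<forall>i<n. \<forall>j<n. (i, j) \<in> (Ed \<inter> ({..<n} \<times> {..<n}))\<^sup>*)"

definition UJSC :: "nat \<Rightarrow> (nat \<Rightarrow> (nat \<times> nat) set) \<Rightarrow> nat \<Rightarrow> bool" where
  "UJSC n E B \<longleftrightarrow> B \<ge> 1 \<and> (\<forall>k. strongly_connected n (\<Union>t\<in>{k..k + B - 1}. E t))"

definition global_consensus ::
  "nat \<Rightarrow> (nat \<Rightarrow> (nat \<times> nat) set) \<Rightarrow> (nat \<Rightarrow> real) \<Rightarrow> (nat \<Rightarrow> real) \<Rightarrow> bool" where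
  "global_consensus n E \<eta> \<alpha> \<longleftrightarrow>
     (\<forall>k0 x0. \<exists>z. \<forall>i<n. (\<lambda>m. traj n E \<eta> \<alpha> k0 x0 m i) \<longlonglongrightarrow> z)"

end

theory Submission
  imports Defs
begin

lemma cut_edge:
  assumes "(i, j) \<in> R\<^sup>*" "i \<in> G" "j \<notin> G"
  shows "\<exists>a b. (a, b) \<in> R \<and> a \<in> G \<and> b \<notin> G"
  using assms by (induction rule: rtrancl_induct) auto

locale cs =
  fixes n :: nat and E :: "nat \<Rightarrow> (nat \<times> nat) set" and \<eta> \<alpha> :: "nat \<Rightarrow> real"
    and k0 :: nat and x0 :: "nat \<Rightarrow> real"
  assumes npos: "n \<ge> 1" and A: "in_A_ave \<eta> \<alpha>"
begin

abbreviation x where "x m \<equiv> traj n E \<eta> \<alpha> k0 x0 m"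
definition Mx where "Mx m = Max (x m ` {..<n})"
definition mx where "mx m = Min (x m ` {..<n})"

lemma par: "0 < \<eta> k" "\<eta> k \<le> 1" "0 \<le> \<alpha> k" "\<alpha> k \<le> 1 - \<eta> k"
  using A unfolding in_A_ave_def by auto

lemma ne: "{..<n} \<noteq> {}" using npos by (simp add: lessThan_empty_iff)

lemma nb: "i < n \<Longrightarrow> nbrs n E k i \<subseteq> {..<n}" "i < n \<Longrightarrow> finite (nbrs n E k i)" "i < n \<Longrightarrow> i \<in> nbrs n E k i"
  "i < n \<Longrightarrow> nbrs n E k i \<noteq> {}"
  unfolding nbrs_def by auto

lemma bnd: "i < n \<Longrightarrow> mx m \<le> x m i \<and> x m i \<le> Mx m"
  unfolding Mx_def mx_def by auto

lemma nbbnd: assumes "i < n"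
  shows "mx m \<le> Min (x m ` nbrs n E k i)" "Max (x m ` nbrs n E k i) \<le> Mx m"
    "Min (x m ` nbrs n E k i) \<le> Max (x m ` nbrs n E k i)"
proof -
  show "mx m \<le> Min (x m ` nbrs n E k i)" unfolding mx_def
    using nb[OF assms, of k] ne by (intro Min_antimono) auto
  show "Max (x m ` nbrs n E k i) \<le> Mx m" unfolding Mx_def
    using nb[OF assms, of k] ne by (intro Max_mono) auto
  show "Min (x m ` nbrs n E k i) \<le> Max (x m ` nbrs n E k i)"
    using nb[OF assms, of k] by (simp add: Min_le_iff Max_ge_iff)
qed

lemma xSuc: "x (Suc m) i = \<eta> (k0+m) * x m i + \<alpha> (k0+m) * Min (x m ` nbrs n E (k0+m) i)
   + (1 - \<eta> (k0+m) - \<alpha> (k0+m)) * Max (x m ` nbrs n E (k0+m) i)"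
  by (simp add: step_def)

lemma next_bnd: assumes "i < n"
  shows "mx m \<le> x (Suc m) i \<and> x (Suc m) i \<le> Mx m"
proof -
  let ?a = "\<eta> (k0+m)" and ?b = "\<alpha> (k0+m)" and ?c = "1 - \<eta> (k0+m) - \<alpha> (k0+m)"
  let ?mi = "Min (x m ` nbrs n E (k0+m) i)" and ?ma = "Max (x m ` nbrs n E (k0+m) i)"
  have a: "?a \<ge> 0" "?b \<ge> 0" "?c \<ge> 0" using par[of "k0+m"] by auto
  have h: "mx m \<le> x m i" "x m i \<le> Mx m" "mx m \<le> ?mi" "?mi \<le> ?ma" "?ma \<le> Mx m"
    using bnd[OF assms] nbbnd[OF assms] by auto
  have "?a * x m i \<le> ?a * Mx m" "?b * ?mi \<le> ?b * Mx m" "?c * ?ma \<le> ?c * Mx m"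
    using h a by (auto intro!: mult_left_mono)
  moreover have "?a * x m i \<ge> ?a * mx m" "?b * ?mi \<ge> ?b * mx m" "?c * ?ma \<ge> ?c * mx m"
    using h a by (auto intro!: mult_left_mono)
  moreover have "?a * Mx m + ?b * Mx m + ?c * Mx m = Mx m" "?a * mx m + ?b * mx m + ?c * mx m = mx m"
    by (simp_all add: algebra_simps)
  ultimately show ?thesis unfolding xSuc by linarith
qed

lemma Mx_Suc: "Mx (Suc m) \<le> Mx m"
  unfolding Mx_def[of "Suc m"] using ne next_bnd by (simp add: Max_le_iff)
lemma mx_Suc: "mx m \<le> mx (Suc m)"
  unfolding mx_def[of "Suc m"] using ne next_bnd by (simp add: Min_ge_iff)

lemma Mx_mono: "m \<le> m' \<Longrightarrow> Mx m' \<le> Mx m"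
  using decseq_SucI[of Mx, OF Mx_Suc] by (simp add: decseq_def)
lemma mx_mono: "m \<le> m' \<Longrightarrow> mx m \<le> mx m'"
  using incseq_SucI[of mx, OF mx_Suc] by (simp add: incseq_def)
lemma mxMx: "mx m \<le> Mx m" using bnd[of 0 m] npos by fastforce

lemma gap: assumes "i < n" "j \<in> nbrs n E (k0+m) i" "Mx m \<le> M"
  shows "\<alpha> (k0+m) * (M - x m j) \<le> M - x (Suc m) i"
proof -
  let ?a = "\<eta> (k0+m)" and ?b = "\<alpha> (k0+m)" and ?c = "1 - \<eta> (k0+m) - \<alpha> (k0+m)"
  let ?mi = "Min (x m ` nbrs n E (k0+m) i)" and ?ma = "Max (x m ` nbrs n E (k0+m) i)"
  have a: "?a \<ge> 0" "?b \<ge> 0" "?c \<ge> 0" using par[of "k0+m"] by auto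
  have h1: "x m i \<le> M" using bnd[OF assms(1), of m] assms(3) by linarith
  have h2: "?ma \<le> M" using nbbnd(2)[OF assms(1), of m "k0+m"] assms(3) by linarith
  have h3: "?mi \<le> x m j" using assms(2) nb[OF assms(1)] by simp
  note h = h1 h3 h2
  have e: "M - x (Suc m) i = ?a * (M - x m i) + ?b * (M - ?mi) + ?c * (M - ?ma)"
    unfolding xSuc by (simp add: algebra_simps)
  have "?a * (M - x m i) \<ge> 0" "?c * (M - ?ma) \<ge> 0" using a h by auto
  moreover have "?b * (M - ?mi) \<ge> ?b * (M - x m j)" using a h by (auto intro!: mult_left_mono)
  ultimately show ?thesis using e by linarith
qed

definition c where "c m0 r = (\<Prod>t\<in>{k0+m0..<k0+m0+r}. \<alpha> t)"
definition G where "G m0 r = {i. i<n \<and> c m0 r * (Mx m0 - mx m0) \<le> Mx m0 - x (m0+r) i}"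

lemma c_Suc: "c m0 (Suc r) = c m0 r * \<alpha> (k0+m0+r)"
  unfolding c_def by (simp add: prod.atLeastLessThan_Suc)
lemma c_nonneg: "c m0 r \<ge> 0" unfolding c_def using par by (auto intro: prod_nonneg)
lemma c0: "c m0 0 = 1" unfolding c_def by simp

lemma G_sub: "G m0 r \<subseteq> {..<n}" unfolding G_def by auto

lemma G_edge: assumes "a \<in> G m0 r" "b < n" "a \<in> nbrs n E (k0+m0+r) b"
  shows "b \<in> G m0 (Suc r)"
proof -
  have a: "a < n" "c m0 r * (Mx m0 - mx m0) \<le> Mx m0 - x (m0+r) a" using assms(1) unfolding G_def by auto
  have M: "Mx (m0+r) \<le> Mx m0" by (rule Mx_mono) simp
  have "\<alpha> (k0+(m0+r)) * (Mx m0 - x (m0+r) a) \<le> Mx m0 - x (Suc (m0+r)) b"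
    by (rule gap[OF assms(2) _ M]) (use assms(3) in \<open>simp add: add.assoc\<close>)
  moreover have "\<alpha> (k0+(m0+r)) * (c m0 r * (Mx m0 - mx m0)) \<le> \<alpha> (k0+(m0+r)) * (Mx m0 - x (m0+r) a)"
    using a par by (auto intro!: mult_left_mono)
  ultimately show ?thesis using assms(2) unfolding G_def c_Suc
    by (simp add: algebra_simps)
qed

lemma G_step: "G m0 r \<subseteq> G m0 (Suc r)"
proof
  fix i assume i: "i \<in> G m0 r"
  then have "i < n" unfolding G_def by auto
  then show "i \<in> G m0 (Suc r)" using G_edge[OF i] nb by auto
qed

lemma G_mono: "r \<le> r' \<Longrightarrow> G m0 r \<subseteq> G m0 r'"
  using lift_Suc_mono_le[of "G m0", OF G_step] by blast

lemma G0: "G m0 0 \<noteq> {}"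
proof -
  have "mx m0 \<in> x m0 ` {..<n}" unfolding mx_def using ne by (intro Min_in) auto
  then obtain i where "i < n" "x m0 i = mx m0" by auto
  then have "i \<in> G m0 0" unfolding G_def c0 by simp
  then show ?thesis by auto
qed

lemma window:
  assumes U: "UJSC n E B" and ne2: "G m0 (w*B) \<noteq> {..<n}"
  shows "G m0 (w*B) \<subset> G m0 (Suc w * B)"
proof -
  have B: "B \<ge> 1" using U unfolding UJSC_def by auto
  have sub: "G m0 (w*B) \<subseteq> G m0 (Suc w * B)" by (rule G_mono) simp
  obtain i where i: "i \<in> G m0 (w*B)" using G0 G_mono[of 0 "w*B" m0] by blast
  obtain j where j: "j < n" "j \<notin> G m0 (w*B)" using ne2 G_sub by blast
  let ?k = "k0+m0+w*B"
  let ?R = "(\<Union>t\<in>{?k..?k + B - 1}. E t) \<inter> ({..<n} \<times> {..<n})"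
  have "(i, j) \<in> ?R\<^sup>*" using U i j G_sub unfolding UJSC_def strongly_connected_def by blast
  then obtain a b where ab: "(a,b) \<in> ?R" "a \<in> G m0 (w*B)" "b \<notin> G m0 (w*B)"
    using cut_edge[of i j ?R] i j by blast
  then obtain t where t: "t \<in> {?k..?k+B-1}" "(a,b) \<in> E t" "a < n" "b < n" by blast
  define r where "r = t - (k0+m0)"
  have r: "t = k0+m0+r" "w*B \<le> r" "Suc r \<le> Suc w * B" using t B unfolding r_def by auto
  have "a \<in> G m0 r" using G_mono[OF r(2)] ab by blast
  moreover have "a \<in> nbrs n E (k0+m0+r) b" using t r unfolding nbrs_def by auto
  ultimately have "b \<in> G m0 (Suc r)" using G_edge t by blast
  then have "b \<in> G m0 (Suc w * B)" using G_mono[OF r(3)] by blast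
  then show ?thesis using sub ab by blast
qed

lemma card_G: assumes U: "UJSC n E B"
  shows "G m0 (w*B) = {..<n} \<or> w+1 \<le> card (G m0 (w*B))"
proof (induction w)
  case 0
  have "finite (G m0 0)" using G_sub finite_subset by blast
  then show ?case using G0 by (auto simp: card_gt_0_iff Suc_le_eq)
next
  case (Suc w)
  show ?case
  proof (cases "G m0 (w*B) = {..<n}")
    case True
    then have "G m0 (w*B) \<subseteq> G m0 (Suc w*B)" by (intro G_mono) simp
    then show ?thesis using True G_sub[of m0 "Suc w * B"] by auto
  next
    case False
    then have "G m0 (w*B) \<subset> G m0 (Suc w * B)" using window[OF U] by blast
    then have "card (G m0 (w*B)) < card (G m0 (Suc w * B))"
      by (rule psubset_card_mono[rotated]) (use G_sub finite_subset in blast)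
    then show ?thesis using Suc False by auto
  qed
qed

lemma G_all: assumes U: "UJSC n E B" shows "G m0 ((n-1)*B) = {..<n}"
proof -
  have "G m0 ((n-1)*B) = {..<n} \<or> n \<le> card (G m0 ((n-1)*B))"
    using card_G[OF U, of m0 "n-1"] npos by auto
  then show ?thesis using G_sub[of m0 "(n-1)*B"]
    by (metis card_lessThan card_seteq finite_lessThan)
qed

lemma contract: assumes U: "UJSC n E B"
  shows "Mx (m0+(n-1)*B) - mx (m0+(n-1)*B) \<le> (1 - c m0 ((n-1)*B)) * (Mx m0 - mx m0)"
proof -
  let ?T = "(n-1)*B"
  have "\<forall>i<n. c m0 ?T * (Mx m0 - mx m0) \<le> Mx m0 - x (m0+?T) i"
    using G_all[OF U, of m0] unfolding G_def by auto
  then have "Mx (m0+?T) \<le> Mx m0 - c m0 ?T * (Mx m0 - mx m0)"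
    unfolding Mx_def[of "m0+?T"] using ne by (auto simp: Max_le_iff)
  moreover have "mx m0 \<le> mx (m0+?T)" by (rule mx_mono) simp
  ultimately show ?thesis by (simp add: algebra_simps)
qed

lemma consensus_alpha:
  assumes U: "UJSC n E B" and n2: "n \<ge> 2"
    and ns: "\<not> summable (\<lambda>s. \<Prod>k\<in>{s*(n-1)*B..<(s+1)*(n-1)*B}. \<alpha> k)"
  shows "\<exists>z. \<forall>i<n. (\<lambda>m. x m i) \<longlonglongrightarrow> z"
proof -
  define T where "T = (n-1)*B"
  have B: "B \<ge> 1" using U unfolding UJSC_def by auto
  have T1: "T \<ge> 1" unfolding T_def using B n2 by simp
  define p where "p s = (\<Prod>k\<in>{s*(n-1)*B..<(s+1)*(n-1)*B}. \<alpha> k)" for s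
  have p0: "0 \<le> p s" for s unfolding p_def using par by (auto intro: prod_nonneg)
  define ms where "ms j = (k0+j)*T - k0" for j
  have kle: "k0 \<le> (k0+j)*T" for j
  proof -
    have "k0 \<le> k0*T" using T1 by simp
    also have "\<dots> \<le> (k0+j)*T" by simp
    finally show ?thesis .
  qed
  have msS: "ms (Suc j) = ms j + T" for j
    unfolding ms_def using kle[of j] by (simp add: algebra_simps)
  have cp: "c (ms j) T = p (k0+j)" for j
  proof -
    have e0: "k0 + ms j = (k0+j)*T" unfolding ms_def using kle[of j] by simp
    have e1: "(k0+j)*(n-1)*B = (k0+j)*T" and e2: "(k0+j+1)*(n-1)*B = (k0+j)*T + T"
      unfolding T_def by (simp_all add: algebra_simps)
    show ?thesis by (simp only: c_def p_def e0 e1 e2)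
  qed
  define Dl where "Dl m = Mx m - mx m" for m
  have Dl0: "Dl m \<ge> 0" for m unfolding Dl_def using mxMx[of m] by simp
  have Dlmono: "m \<le> m' \<Longrightarrow> Dl m' \<le> Dl m" for m m'
    unfolding Dl_def using Mx_mono mx_mono by fastforce
  define S where "S j = (\<Sum>u<j. p (u+k0))" for j
  have rec: "Dl (ms j) \<le> exp (- S j) * Dl (ms 0)" for j
  proof (induction j)
    case 0 then show ?case by (simp add: S_def)
  next
    case (Suc j)
    have "Dl (ms (Suc j)) \<le> (1 - p (k0+j)) * Dl (ms j)"
      using contract[OF U, of "ms j"] unfolding msS Dl_def cp[symmetric] T_def by simp
    also have "\<dots> \<le> exp (- p (k0+j)) * Dl (ms j)"
      using Dl0 exp_ge_add_one_self[of "- p (k0+j)"] by (intro mult_right_mono) auto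
    also have "\<dots> \<le> exp (- p (k0+j)) * (exp (- S j) * Dl (ms 0))"
      using Suc by (intro mult_left_mono) auto
    also have "\<dots> = exp (- S (Suc j)) * Dl (ms 0)"
      unfolding S_def by (simp add: exp_diff exp_minus field_simps add.commute)
    finally show ?case .
  qed
  have unb: "\<exists>j. K < S j" for K
  proof (rule ccontr)
    assume "\<not> ?thesis"
    then have "summable (\<lambda>u. p (u+k0))"
      by (intro summableI_nonneg_bounded[where x=K]) (auto simp: p0 S_def not_less)
    then have "summable p" by (simp only: summable_iff_shift)
    then show False using ns unfolding p_def[abs_def] by simp
  qed
  have Dlt: "Dl \<longlonglongrightarrow> 0"
  proof (rule LIMSEQ_I)
    fix r :: real assume r: "0 < r"
    obtain j where j: "Dl (ms 0) / r < S j" using unb by blast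
    have "S j < exp (S j)" using exp_ge_add_one_self[of "S j"] by linarith
    then have "Dl (ms 0) / r < exp (S j)" using j by simp
    then have "Dl (ms 0) < r * exp (S j)" using r by (simp add: field_simps)
    then have lt: "exp (- S j) * Dl (ms 0) < r" by (simp add: exp_minus field_simps)
    show "\<exists>no. \<forall>m\<ge>no. norm (Dl m - 0) < r"
    proof (intro exI allI impI)
      fix m assume "ms j \<le> m"
      then have "Dl m \<le> Dl (ms j)" by (rule Dlmono)
      then show "norm (Dl m - 0) < r" using rec[of j] lt Dl0[of m] by simp
    qed
  qed
  have dec: "decseq Mx" using Mx_mono by (simp add: decseq_def)
  have lb: "\<forall>i. mx 0 \<le> Mx i" using mx_mono mxMx by (meson order.trans zero_le)
  obtain L where L: "Mx \<longlonglongrightarrow> L" using decseq_convergent[OF dec lb] by blast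
  have "(\<lambda>m. Mx m - Dl m) \<longlonglongrightarrow> L - 0" using L Dlt by (intro tendsto_diff)
  then have Lm: "mx \<longlonglongrightarrow> L" unfolding Dl_def by simp
  show ?thesis
  proof (intro exI allI impI)
    fix i assume "i < n"
    then show "(\<lambda>m. x m i) \<longlonglongrightarrow> L"
      using bnd by (intro tendsto_sandwich[OF _ _ Lm L]) auto
  qed
qed

end

lemma traj_neg:
  "traj n E \<eta> (\<lambda>k. 1 - \<eta> k - \<alpha> k) k0 (\<lambda>i. - x0 i) m = (\<lambda>i. - traj n E \<eta> \<alpha> k0 x0 m i)"
proof (induction m)
  case 0 then show ?case by simp
next
  case (Suc m)
  have fin: "finite (nbrs n E k i)" "nbrs n E k i \<noteq> {}" for k i unfolding nbrs_def by auto
  have img: "(\<lambda>j. - f j) ` N = uminus ` (f ` N)" for f :: "nat \<Rightarrow> real" and N by auto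
  have mn: "Min ((\<lambda>j. - f j) ` N) = - Max (f ` N)" "Max ((\<lambda>j. - f j) ` N) = - Min (f ` N)"
    if "finite N" "N \<noteq> {}" for f :: "nat \<Rightarrow> real" and N
    using that by (simp_all add: img)
  show ?case
    unfolding traj.simps Suc.IH
    by (rule ext) (simp add: step_def mn[OF fin] algebra_simps)
qed

theorem theorem5:
  fixes n B :: nat and E :: "nat \<Rightarrow> (nat \<times> nat) set" and \<eta> \<alpha> :: "nat \<Rightarrow> real"
  assumes "n \<ge> 3"
    and "\<And>k. E k \<subseteq> {..<n} \<times> {..<n}"
    and "UJSC n E B"
    and "in_A_ave \<eta> \<alpha>"
    and "\<not> summable (\<lambda>s. \<Prod>k\<in>{s*(n-1)*B..<(s+1)*(n-1)*B}. \<alpha> k)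
         \<or> \<not> summable (\<lambda>s. \<Prod>k\<in>{s*(n-1)*B..<(s+1)*(n-1)*B}. 1 - \<alpha> k - \<eta> k)"
  shows "global_consensus n E \<eta> \<alpha>"
  unfolding global_consensus_def
proof (intro allI)
  fix k0 x0
  have n1: "n \<ge> 1" "n \<ge> 2" using assms(1) by auto
  show "\<exists>z. \<forall>i<n. (\<lambda>m. traj n E \<eta> \<alpha> k0 x0 m i) \<longlonglongrightarrow> z"
    using assms(5)
  proof
    assume ns: "\<not> summable (\<lambda>s. \<Prod>k\<in>{s*(n-1)*B..<(s+1)*(n-1)*B}. \<alpha> k)"
    interpret cs n E \<eta> \<alpha> k0 x0 using n1 assms(4) by unfold_locales
    show ?thesis using consensus_alpha[OF assms(3) n1(2) ns] .
  next
    assume ns: "\<not> summable (\<lambda>s. \<Prod>k\<in>{s*(n-1)*B..<(s+1)*(n-1)*B}. 1 - \<alpha> k - \<eta> k)"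
    define \<alpha>' where "\<alpha>' = (\<lambda>k. 1 - \<eta> k - \<alpha> k)"
    have A': "in_A_ave \<eta> \<alpha>'" using assms(4) unfolding in_A_ave_def \<alpha>'_def by auto
    interpret cs n E \<eta> \<alpha>' k0 "\<lambda>i. - x0 i" using n1 A' by unfold_locales
    have ns': "\<not> summable (\<lambda>s. \<Prod>k\<in>{s*(n-1)*B..<(s+1)*(n-1)*B}. \<alpha>' k)"
      using ns unfolding \<alpha>'_def by (simp add: algebra_simps)
    obtain z where z: "\<forall>i<n. (\<lambda>m. traj n E \<eta> \<alpha>' k0 (\<lambda>i. - x0 i) m i) \<longlonglongrightarrow> z"
      using consensus_alpha[OF assms(3) n1(2) ns'] by blast
    show ?thesis
    proof (intro exI allI impI)
      fix i assume "i < n"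
      then have "(\<lambda>m. - traj n E \<eta> \<alpha> k0 x0 m i) \<longlonglongrightarrow> z"
        using z unfolding \<alpha>'_def traj_neg by simp
      then have "(\<lambda>m. - (- traj n E \<eta> \<alpha> k0 x0 m i)) \<longlonglongrightarrow> - z" by (rule tendsto_minus)
      then show "(\<lambda>m. traj n E \<eta> \<alpha> k0 x0 m i) \<longlonglongrightarrow> - z" by simp
    qed
  qed
qed

end
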